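(* Fix $c\in(0,1)$ and a countable collection of languages $\mathcal{L}$. There exists an element-based generator that generates in the limit from $\mathcal{L}$ under enumerations with $c$-noise and arbitrary omissions (i.e., for every $K\in\mathcal{L}$ and every enumeration of $K$ with $c$-noise and arbitrary omissions there is $n^\star$ with $w_n\in K$ for all $n\ge n^\star$) if and only if the following condition holds: for every non-empty finite subcollection $\mathcal{L}'\subseteq\mathcal{L}$ and every enumeration $x_{1:\infty}$, either (a) there is some $L'\in\mathcal{L}'$ such that $R(L';x_{1:n})>c$ for infinitely many $n$, or (b) $|\bigcap_{L\in\mathcal{L}'}L|=\infty$.
   Context: The universe is $U=\mathbb{N}$. A language is an infinite subset of $U$; a collection is a countable family of languages. An enumeration is a sequence $x_1,x_2,\dots$ of distinct elements of $U$; $S_n=\{x_1,\dots,x_n\}$. The empirical noise rate is $R(L;x_{1:n})=\frac1n|\{t\le n:x_t\notin L\}|$. An enumeration of $L$ with $c$-noise is a sequence in which every element of $L$ appears exactly once and there is $n^\star$ with $R(L;x_{1:n})\le c$ for all $n\ge n^\star$. An enumeration of $K$ with $c$-noise and arbitrary omissions is an enumeration with $c$-noise of some $\hat K\subseteq K$ with $|\hat K|=\infty$. An element-based generator is a sequence of maps $\mathds{G}_n$ that, given $x_1,\dots,x_n$ (and knowledge of $\mathcal{L}$, but not of $K$), outputs $w_n\in U\setminus(S_n\cup\{w_1,\dots,w_{n-1}\})$. *)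

theory Defs
  imports Complex_Main "HOL-Library.Countable_Set"
begin

text \<open>Universe U = nat. Sequences are 0-indexed: the paper's x_t is x (t-1),
  so S_n = x ` {..<n} and the prefix x_1..x_n is the list map x [0..<n].\<close>

definition is_language :: "nat set \<Rightarrow> bool" where
  "is_language L \<longleftrightarrow> infinite L"

definition is_collection :: "nat set set \<Rightarrow> bool" where
  "is_collection \<L> \<longleftrightarrow> countable \<L> \<and> (\<forall>L\<in>\<L>. is_language L)"

definition is_enumeration :: "(nat \<Rightarrow> nat) \<Rightarrow> bool" where
  "is_enumeration x \<longleftrightarrow> inj x"

definition S_set :: "(nat \<Rightarrow> nat) \<Rightarrow> nat \<Rightarrow> nat set" where
  "S_set x n = x ` {..<n}"

definition prefix :: "(nat \<Rightarrow> nat) \<Rightarrow> nat \<Rightarrow> nat list" where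
  "prefix x n = map x [0..<n]"

definition noise_rate :: "nat set \<Rightarrow> (nat \<Rightarrow> nat) \<Rightarrow> nat \<Rightarrow> real" where
  "noise_rate L x n = real (card {t. t < n \<and> x t \<notin> L}) / real n"

definition enum_with_noise :: "real \<Rightarrow> nat set \<Rightarrow> (nat \<Rightarrow> nat) \<Rightarrow> bool" where
  "enum_with_noise c L x \<longleftrightarrow> is_enumeration x \<and> L \<subseteq> range x \<and>
     (\<exists>n0. \<forall>n\<ge>n0. noise_rate L x n \<le> c)"

definition enum_with_noise_omissions :: "real \<Rightarrow> nat set \<Rightarrow> (nat \<Rightarrow> nat) \<Rightarrow> bool" where
  "enum_with_noise_omissions c K x \<longleftrightarrow>
     (\<exists>Khat. Khat \<subseteq> K \<and> infinite Khat \<and> enum_with_noise c Khat x)"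

text \<open>An element-based generator: G maps the prefix x_1..x_n (n \<ge> 1) to w_n.
  Knowledge of the collection is allowed since G is chosen after the collection.\<close>
definition gen_out :: "(nat list \<Rightarrow> nat) \<Rightarrow> (nat \<Rightarrow> nat) \<Rightarrow> nat \<Rightarrow> nat" where
  "gen_out G x n = G (prefix x n)"

definition is_generator :: "(nat list \<Rightarrow> nat) \<Rightarrow> bool" where
  "is_generator G \<longleftrightarrow> (\<forall>x. is_enumeration x \<longrightarrow> (\<forall>n\<ge>1.
      gen_out G x n \<notin> S_set x n \<and>
      (\<forall>m. 1 \<le> m \<and> m < n \<longrightarrow> gen_out G x m \<noteq> gen_out G x n)))"

definition generates_in_limit_noise_omissions ::
  "real \<Rightarrow> nat set set \<Rightarrow> (nat list \<Rightarrow> nat) \<Rightarrow> bool" where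
  "generates_in_limit_noise_omissions c \<L> G \<longleftrightarrow>
     (\<forall>K\<in>\<L>. \<forall>x. enum_with_noise_omissions c K x \<longrightarrow>
        (\<exists>n0. \<forall>n\<ge>n0. gen_out G x n \<in> K))"

end

theory Submission
  imports Defs
begin

definition viol :: "real \<Rightarrow> nat set \<Rightarrow> nat list \<Rightarrow> nat" where
  "viol c L xs = card {m. m < length xs \<and> noise_rate L (nth xs) m > c}"

definition Bset :: "real \<Rightarrow> (nat \<Rightarrow> nat set) \<Rightarrow> nat list \<Rightarrow> nat \<Rightarrow> nat set" where
  "Bset c Lf xs m = {i. i + viol c (Lf i) xs < m}"

definition okm :: "real \<Rightarrow> (nat \<Rightarrow> nat set) \<Rightarrow> nat list \<Rightarrow> nat \<Rightarrow> bool" where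
  "okm c Lf xs m \<longleftrightarrow> infinite (\<Inter> (Lf ` Bset c Lf xs m))"

definition mstar :: "real \<Rightarrow> (nat \<Rightarrow> nat set) \<Rightarrow> nat list \<Rightarrow> nat" where
  "mstar c Lf xs = Max {m. m \<le> length xs \<and> okm c Lf xs m}"

definition Avail :: "real \<Rightarrow> (nat \<Rightarrow> nat set) \<Rightarrow> nat list \<Rightarrow> nat set" where
  "Avail c Lf xs = \<Inter> (Lf ` Bset c Lf xs (mstar c Lf xs))"

definition pick_out :: "real \<Rightarrow> (nat \<Rightarrow> nat set) \<Rightarrow> nat list \<Rightarrow> nat set \<Rightarrow> nat" where
  "pick_out c Lf xs Os = (LEAST w. w \<in> Avail c Lf xs \<and> w \<notin> set xs \<and> w \<notin> Os)"

primrec outs :: "real \<Rightarrow> (nat \<Rightarrow> nat set) \<Rightarrow> nat list \<Rightarrow> nat \<Rightarrow> nat set" where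
  "outs c Lf xs 0 = {}"
| "outs c Lf xs (Suc n) = (if n = 0 then {} else
     insert (pick_out c Lf (take n xs) (outs c Lf xs n)) (outs c Lf xs n))"

definition Gen :: "real \<Rightarrow> (nat \<Rightarrow> nat set) \<Rightarrow> nat list \<Rightarrow> nat" where
  "Gen c Lf xs = pick_out c Lf xs (outs c Lf xs (length xs))"

lemma noise_rate_cong:
  assumes "\<And>t. t < m \<Longrightarrow> x t = y t"
  shows "noise_rate L x m = noise_rate L y m"
proof -
  have "{t. t < m \<and> x t \<notin> L} = {t. t < m \<and> y t \<notin> L}" using assms by auto
  thus ?thesis unfolding noise_rate_def by simp
qed

lemma prefix_len[simp]: "length (prefix x n) = n" by (simp add: prefix_def)
lemma prefix_nth: "t < n \<Longrightarrow> prefix x n ! t = x t" by (simp add: prefix_def)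
lemma prefix_take: "m \<le> n \<Longrightarrow> take m (prefix x n) = prefix x m"
  by (simp add: prefix_def take_map min_def)
lemma prefix_set: "set (prefix x n) = S_set x n"
  by (auto simp: prefix_def S_set_def)

lemma viol_prefix: "viol c L (prefix x n) = card {m. m < n \<and> noise_rate L x m > c}"
proof -
  have "{m. m < n \<and> noise_rate L (nth (prefix x n)) m > c} = {m. m < n \<and> noise_rate L x m > c}"
  proof (intro Collect_cong conj_cong refl)
    fix m assume "m < n"
    thus "(noise_rate L (nth (prefix x n)) m > c) = (noise_rate L x m > c)"
      using noise_rate_cong[of m "nth (prefix x n)" x L] prefix_nth[of _ n x] by auto
  qed
  thus ?thesis unfolding viol_def by simp
qed

lemma Bset_sub: "Bset c Lf xs m \<subseteq> {..<m}" by (auto simp: Bset_def)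
lemma Bset_fin: "finite (Bset c Lf xs m)" by (rule finite_subset[OF Bset_sub]) auto
lemma Bset_mono: "m \<le> m' \<Longrightarrow> Bset c Lf xs m \<subseteq> Bset c Lf xs m'" by (auto simp: Bset_def)

lemma okm0: "okm c Lf xs 0" by (simp add: okm_def Bset_def)

lemma mstar_props:
  "okm c Lf xs (mstar c Lf xs)"
  "\<And>M. M \<le> length xs \<Longrightarrow> okm c Lf xs M \<Longrightarrow> M \<le> mstar c Lf xs"
proof -
  let ?S = "{m. m \<le> length xs \<and> okm c Lf xs m}"
  have f: "finite ?S" by (rule finite_subset[of _ "{..length xs}"]) auto
  have ne: "0 \<in> ?S" using okm0 by auto
  have "Max ?S \<in> ?S" using f ne Max_in by blast
  thus "okm c Lf xs (mstar c Lf xs)" by (simp add: mstar_def)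
  fix M assume "M \<le> length xs" "okm c Lf xs M"
  thus "M \<le> mstar c Lf xs" unfolding mstar_def using f by (intro Max_ge) auto
qed

lemma Avail_inf: "infinite (Avail c Lf xs)"
  using mstar_props(1) unfolding Avail_def okm_def by blast

lemma pick_out_props:
  assumes "finite Os"
  shows "pick_out c Lf xs Os \<in> Avail c Lf xs \<and> pick_out c Lf xs Os \<notin> set xs \<and> pick_out c Lf xs Os \<notin> Os"
proof -
  have "infinite (Avail c Lf xs - set xs - Os)" using Avail_inf assms by auto
  then obtain w where "w \<in> Avail c Lf xs - set xs - Os" using infinite_imp_nonempty by blast
  hence "\<exists>w. w \<in> Avail c Lf xs \<and> w \<notin> set xs \<and> w \<notin> Os" by blast
  thus ?thesis unfolding pick_out_def by (rule LeastI_ex)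
qed

lemma outs_fin: "finite (outs c Lf xs n)" by (induction n) auto

lemma outs_take: "outs c Lf xs n = outs c Lf (take n xs) n"
proof (induction n arbitrary: xs)
  case 0 thus ?case by simp
next
  case (Suc n)
  have a: "outs c Lf xs n = outs c Lf (take n xs) n" by (rule Suc.IH)
  have b: "outs c Lf (take (Suc n) xs) n = outs c Lf (take n xs) n"
    using Suc.IH[of "take (Suc n) xs"] by (simp add: min_def)
  show ?case using a b by (simp add: min_def)
qed

lemma outs_prefix:
  "outs c Lf (prefix x n) n = {gen_out (Gen c Lf) x m | m. 1 \<le> m \<and> m < n}"
proof (induction n)
  case 0 thus ?case by simp
next
  case (Suc n)
  have e1: "outs c Lf (prefix x (Suc n)) n = outs c Lf (prefix x n) n"
    using outs_take[of c Lf "prefix x (Suc n)" n] prefix_take[of n "Suc n" x] by simp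
  have e2: "take n (prefix x (Suc n)) = prefix x n" using prefix_take by simp
  have g: "gen_out (Gen c Lf) x n = pick_out c Lf (prefix x n) (outs c Lf (prefix x n) n)"
    by (simp add: gen_out_def Gen_def)
  show ?case
  proof (cases "n = 0")
    case True thus ?thesis by auto
  next
    case False
    have "{gen_out (Gen c Lf) x m | m. 1 \<le> m \<and> m < Suc n} =
      insert (gen_out (Gen c Lf) x n) {gen_out (Gen c Lf) x m | m. 1 \<le> m \<and> m < n}"
      using False by (auto simp: less_Suc_eq)
    thus ?thesis using False e1 e2 g Suc.IH by simp
  qed
qed

lemma Gen_is_generator: "is_generator (Gen c Lf)"
  unfolding is_generator_def
proof (intro allI impI conjI)
  fix x n m
  let ?O = "outs c Lf (prefix x n) n"
  have g: "gen_out (Gen c Lf) x n = pick_out c Lf (prefix x n) ?O"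
    by (simp add: gen_out_def Gen_def)
  have p: "gen_out (Gen c Lf) x n \<notin> set (prefix x n) \<and> gen_out (Gen c Lf) x n \<notin> ?O"
    using pick_out_props[OF outs_fin] g by metis
  thus "gen_out (Gen c Lf) x n \<notin> S_set x n" by (simp add: prefix_set)
  assume "1 \<le> m \<and> m < n"
  hence "gen_out (Gen c Lf) x m \<in> ?O" unfolding outs_prefix by blast
  thus "gen_out (Gen c Lf) x m \<noteq> gen_out (Gen c Lf) x n" using p by metis
qed

lemma card_unbounded:
  assumes "infinite {m::nat. P m}"
  shows "\<exists>N. \<forall>n\<ge>N. M \<le> card {m. m < n \<and> P m}"
proof -
  obtain F where F: "F \<subseteq> {m. P m}" "finite F" "card F = M"
    using infinite_arbitrarily_large[OF assms] by blast
  define N where "N = Suc (Max (insert 0 F))"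
  have "\<forall>n\<ge>N. M \<le> card {m. m < n \<and> P m}"
  proof (intro allI impI)
    fix n assume "N \<le> n"
    have "F \<subseteq> {m. m < n \<and> P m}"
    proof
      fix f assume "f \<in> F"
      hence "f \<le> Max (insert 0 F)" using F(2) by simp
      thus "f \<in> {m. m < n \<and> P m}" using \<open>f \<in> F\<close> F(1) \<open>N \<le> n\<close> N_def by auto
    qed
    thus "M \<le> card {m. m < n \<and> P m}" using F(3) by (intro card_mono[of _ F, simplified F(3)]) auto
  qed
  thus ?thesis by blast
qed

lemma card_bounded:
  assumes "finite {m::nat. P m}"
  shows "card {m. m < n \<and> P m} \<le> card {m. P m}"
  using assms by (intro card_mono) auto

lemma sufficiency:
  fixes c :: real and \<L> :: "nat set set"
  assumes cnt: "countable \<L>"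
  and Cond: "\<forall>\<L>'. \<L>' \<subseteq> \<L> \<and> finite \<L>' \<and> \<L>' \<noteq> {} \<longrightarrow>
      (\<forall>x. is_enumeration x \<longrightarrow>
        (\<exists>L'\<in>\<L>'. \<exists>\<^sub>\<infinity>n. noise_rate L' x n > c) \<or> infinite (\<Inter>\<L>'))"
  shows "generates_in_limit_noise_omissions c \<L> (Gen c (from_nat_into \<L>))"
  unfolding generates_in_limit_noise_omissions_def
proof (intro ballI allI impI)
  define Lf where "Lf = from_nat_into \<L>"
  fix K x assume K: "K \<in> \<L>" and en: "enum_with_noise_omissions c K x"
  obtain Kh n0 where Kh: "Kh \<subseteq> K" "is_enumeration x" "\<forall>n\<ge>n0. noise_rate Kh x n \<le> c"
    using en unfolding enum_with_noise_omissions_def enum_with_noise_def by blast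
  obtain k where k: "Lf k = K" using from_nat_into_surj[OF cnt K] Lf_def by blast
  have rng: "range Lf \<subseteq> \<L>" using K Lf_def range_from_nat_into_subset by blast
  have le: "noise_rate K x n \<le> noise_rate Kh x n" for n
  proof -
    have "card {t. t < n \<and> x t \<notin> K} \<le> card {t. t < n \<and> x t \<notin> Kh}"
      using Kh(1) by (intro card_mono) auto
    thus ?thesis unfolding noise_rate_def by (intro divide_right_mono) auto
  qed
  have finK: "finite {m. noise_rate K x m > c}"
  proof (rule finite_subset[of _ "{..<n0}"])
    show "{m. noise_rate K x m > c} \<subseteq> {..<n0}"
    proof
      fix m assume "m \<in> {m. noise_rate K x m > c}"
      hence "noise_rate K x m > c" by simp
      moreover have "n0 \<le> m \<Longrightarrow> noise_rate K x m \<le> c" using Kh(3) le[of m] by force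
      ultimately show "m \<in> {..<n0}" by force
    qed
  qed auto
  define vK where "vK = card {m. noise_rate K x m > c}"
  define M where "M = Suc (k + vK)"
  have kin: "k \<in> Bset c Lf (prefix x n) M" for n
    using card_bounded[OF finK, of n] k unfolding Bset_def M_def vK_def viol_prefix by simp
  define good where "good i \<longleftrightarrow> finite {m. noise_rate (Lf i) x m > c}" for i
  have ev: "\<forall>i\<in>{..<M}. eventually (\<lambda>n. \<not> good i \<longrightarrow> M \<le> card {m. m < n \<and> noise_rate (Lf i) x m > c}) sequentially"
  proof
    fix i
    show "eventually (\<lambda>n. \<not> good i \<longrightarrow> M \<le> card {m. m < n \<and> noise_rate (Lf i) x m > c}) sequentially"
    proof (cases "good i")
      case True thus ?thesis by simp
    next
      case False
      then obtain N where "\<forall>n\<ge>N. M \<le> card {m. m < n \<and> noise_rate (Lf i) x m > c}"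
        using card_unbounded unfolding good_def by blast
      thus ?thesis unfolding eventually_sequentially by blast
    qed
  qed
  have "eventually (\<lambda>n. \<forall>i\<in>{..<M}. \<not> good i \<longrightarrow> M \<le> card {m. m < n \<and> noise_rate (Lf i) x m > c}) sequentially"
    by (rule eventually_ball_finite[OF _ ev]) simp
  then obtain N1 where N1: "\<And>n i. n \<ge> N1 \<Longrightarrow> i < M \<Longrightarrow> \<not> good i \<Longrightarrow> M \<le> card {m. m < n \<and> noise_rate (Lf i) x m > c}"
    unfolding eventually_sequentially by blast
  show "\<exists>n0. \<forall>n\<ge>n0. gen_out (Gen c (from_nat_into \<L>)) x n \<in> K"
  proof (intro exI allI impI)
    fix n assume n: "max N1 M \<le> n"
    let ?B = "Bset c Lf (prefix x n) M"
    have allgood: "good i" if "i \<in> ?B" for i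
    proof (rule ccontr)
      assume "\<not> good i"
      moreover have "i < M" using that Bset_sub by blast
      ultimately have "M \<le> viol c (Lf i) (prefix x n)" using N1[of n i] n by (simp add: viol_prefix)
      thus False using that unfolding Bset_def by simp
    qed
    have "(\<exists>L'\<in>Lf ` ?B. \<exists>\<^sub>\<infinity>n. noise_rate L' x n > c) \<or> infinite (\<Inter>(Lf ` ?B))"
    proof -
      have h: "Lf ` ?B \<subseteq> \<L> \<and> finite (Lf ` ?B) \<and> Lf ` ?B \<noteq> {}"
        using rng Bset_fin kin by blast
      show ?thesis using Cond h Kh(2) by presburger
    qed
    moreover have "\<not> (\<exists>L'\<in>Lf ` ?B. \<exists>\<^sub>\<infinity>n. noise_rate L' x n > c)"
      using allgood unfolding good_def INFM_iff_infinite by blast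
    ultimately have "okm c Lf (prefix x n) M" unfolding okm_def by blast
    hence "M \<le> mstar c Lf (prefix x n)" using mstar_props(2) n by simp
    hence "k \<in> Bset c Lf (prefix x n) (mstar c Lf (prefix x n))" using kin Bset_mono by blast
    hence "Avail c Lf (prefix x n) \<subseteq> K" unfolding Avail_def using k by blast
    moreover have "gen_out (Gen c Lf) x n \<in> Avail c Lf (prefix x n)"
      using pick_out_props[OF outs_fin] by (simp add: gen_out_def Gen_def)
    ultimately show "gen_out (Gen c (from_nat_into \<L>)) x n \<in> K" using Lf_def by blast
  qed
qed

lemma card_split: "card {t. t < n \<and> P t} + card {t. t < (n::nat) \<and> \<not> P t} = n"
proof -
  have "{..<n} = {t. t < n \<and> P t} \<union> {t. t < n \<and> \<not> P t}" by auto
  moreover have "card ({t. t < n \<and> P t} \<union> {t. t < n \<and> \<not> P t}) =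
     card {t. t < n \<and> P t} + card {t. t < n \<and> \<not> P t}"
    by (intro card_Un_disjoint) auto
  ultimately show ?thesis by (metis card_lessThan)
qed

lemma infinite_hits:
  fixes c :: real
  assumes "c < 1" and inj: "inj x" and ev: "\<forall>n\<ge>n0. noise_rate L x n \<le> c"
  shows "infinite (L \<inter> range x)"
proof
  assume fin: "finite (L \<inter> range x)"
  have "finite (x -` (L \<inter> range x))" using finite_vimageI[OF fin inj] .
  moreover have "x -` (L \<inter> range x) = {t. x t \<in> L}" by auto
  ultimately have finF: "finite {t. x t \<in> L}" by simp
  define f where "f = card {t. x t \<in> L}"
  define n where "n = max (Suc n0) (Suc (nat \<lceil>real f / (1 - c)\<rceil>))"
  have n0: "n \<ge> n0" "n > 0" unfolding n_def by auto
  have "real f / (1 - c) < real n" unfolding n_def by linarith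
  hence A: "real f < real n * (1 - c)" using assms(1) by (simp add: field_simps)
  have B: "card {t. t < n \<and> x t \<in> L} \<le> f" unfolding f_def using card_bounded[OF finF] .
  have "noise_rate L x n \<le> c" using ev n0 by simp
  hence C: "real (card {t. t < n \<and> x t \<notin> L}) \<le> c * real n"
    using n0(2) unfolding noise_rate_def by (simp add: divide_le_eq)
  have D: "real (card {t. t < n \<and> x t \<in> L}) + real (card {t. t < n \<and> x t \<notin> L}) = real n"
    using card_split[of n "\<lambda>t. x t \<in> L"] by (metis of_nat_add)
  show False using A B C D by (simp add: algebra_simps)
qed

lemma necessity:
  fixes c :: real and \<L> :: "nat set set"
  assumes "c < 1" and gen: "is_generator G" and gl: "generates_in_limit_noise_omissions c \<L> G"
  shows "\<forall>\<L>'. \<L>' \<subseteq> \<L> \<and> finite \<L>' \<and> \<L>' \<noteq> {} \<longrightarrow>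
      (\<forall>x. is_enumeration x \<longrightarrow>
        (\<exists>L'\<in>\<L>'. \<exists>\<^sub>\<infinity>n. noise_rate L' x n > c) \<or> infinite (\<Inter>\<L>'))"
proof (intro allI impI)
  fix \<L>' x
  assume H: "\<L>' \<subseteq> \<L> \<and> finite \<L>' \<and> \<L>' \<noteq> {}" and en: "is_enumeration x"
  show "(\<exists>L'\<in>\<L>'. \<exists>\<^sub>\<infinity>n. noise_rate L' x n > c) \<or> infinite (\<Inter>\<L>')"
  proof (rule ccontr)
    assume "\<not> ?thesis"
    hence nb: "\<forall>L'\<in>\<L>'. \<not> (\<exists>\<^sub>\<infinity>n. noise_rate L' x n > c)" and fin: "finite (\<Inter>\<L>')" by auto
    have evL: "eventually (\<lambda>n. gen_out G x n \<in> L') sequentially" if L': "L' \<in> \<L>'" for L'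
    proof -
      obtain m where m: "\<forall>n>m. \<not> noise_rate L' x n > c"
        using nb L' unfolding not_INFM MOST_nat by blast
      hence m': "\<forall>n\<ge>Suc m. noise_rate L' x n \<le> c" using not_less Suc_le_lessD by blast
      have inf: "infinite (L' \<inter> range x)"
        using infinite_hits[OF assms(1) _ m'] en unfolding is_enumeration_def by blast
      have eqn: "noise_rate (L' \<inter> range x) x n = noise_rate L' x n" for n
      proof -
        have "{t. t < n \<and> x t \<notin> L' \<inter> range x} = {t. t < n \<and> x t \<notin> L'}" by auto
        thus ?thesis unfolding noise_rate_def by simp
      qed
      have "enum_with_noise_omissions c L' x"
        unfolding enum_with_noise_omissions_def enum_with_noise_def
        using inf en m' eqn by (intro exI[of _ "L' \<inter> range x"]) auto
      hence "\<exists>n0. \<forall>n\<ge>n0. gen_out G x n \<in> L'"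
        using gl L' H unfolding generates_in_limit_noise_omissions_def by blast
      thus ?thesis unfolding eventually_sequentially .
    qed
    have "eventually (\<lambda>n. \<forall>L'\<in>\<L>'. gen_out G x n \<in> L') sequentially"
      using H evL by (intro eventually_ball_finite) auto
    then obtain N where N: "\<And>n. n \<ge> N \<Longrightarrow> \<forall>L'\<in>\<L>'. gen_out G x n \<in> L'"
      unfolding eventually_sequentially by blast
    have sub: "gen_out G x ` {max N 1..} \<subseteq> \<Inter>\<L>'" using N by auto
    have "inj_on (gen_out G x) {max N 1..}"
    proof (rule linorder_inj_onI')
      fix i j assume "i \<in> {max N 1..}" "j \<in> {max N 1..}" "i < j"
      thus "gen_out G x i \<noteq> gen_out G x j"
        using gen en unfolding is_generator_def by auto
    qed
    hence "infinite (gen_out G x ` {max N 1..})"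
      using finite_imageD infinite_Ici by blast
    thus False using sub fin finite_subset by blast
  qed
qed

theorem theorem5p4:
  fixes c :: real and \<L> :: "nat set set"
  assumes "0 < c" and "c < 1" and "is_collection \<L>"
  shows "(\<exists>G. is_generator G \<and> generates_in_limit_noise_omissions c \<L> G) \<longleftrightarrow>
    (\<forall>\<L>'. \<L>' \<subseteq> \<L> \<and> finite \<L>' \<and> \<L>' \<noteq> {} \<longrightarrow>
      (\<forall>x. is_enumeration x \<longrightarrow>
        (\<exists>L'\<in>\<L>'. \<exists>\<^sub>\<infinity>n. noise_rate L' x n > c) \<or> infinite (\<Inter>\<L>')))"
proof
  assume "\<exists>G. is_generator G \<and> generates_in_limit_noise_omissions c \<L> G"
  then obtain G where "is_generator G" "generates_in_limit_noise_omissions c \<L> G" by blast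
  thus "\<forall>\<L>'. \<L>' \<subseteq> \<L> \<and> finite \<L>' \<and> \<L>' \<noteq> {} \<longrightarrow>
      (\<forall>x. is_enumeration x \<longrightarrow>
        (\<exists>L'\<in>\<L>'. \<exists>\<^sub>\<infinity>n. noise_rate L' x n > c) \<or> infinite (\<Inter>\<L>'))"
    using necessity[OF assms(2)] by blast
next
  assume C: "\<forall>\<L>'. \<L>' \<subseteq> \<L> \<and> finite \<L>' \<and> \<L>' \<noteq> {} \<longrightarrow>
      (\<forall>x. is_enumeration x \<longrightarrow>
        (\<exists>L'\<in>\<L>'. \<exists>\<^sub>\<infinity>n. noise_rate L' x n > c) \<or> infinite (\<Inter>\<L>'))"
  have "countable \<L>" using assms(3) unfolding is_collection_def by blast
  thus "\<exists>G. is_generator G \<and> generates_in_limit_noise_omissions c \<L> G"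
    using sufficiency[OF _ C] Gen_is_generator by blast
qed

end
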